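(* Let $(X,d)$ be a compact metric space and $f_{1,\infty}$ a commutative sequence of continuous self-maps of $X$. The following are equivalent: (1) $(X,f_{1,\infty})$ is weakly mixing; (2) $(\mathcal{K}(X),\overline{f}_{1,\infty})$ is weakly mixing; (3) $(\mathcal{K}(X),\overline{f}_{1,\infty})$ is topologically transitive.
   Context: Commutative: $f_i\circ f_j=f_j\circ f_i$ for all $i,j$. Write $f_1^n=f_n\circ\cdots\circ f_1$. $\mathcal{K}(X)$ is the hyperspace of non-empty compact subsets of $X$ with the Vietoris topology (equivalently the Hausdorff metric), and $\overline{f}_n(K)=f_n(K)$, so $\overline{f}_1^n(K)=f_1^n(K)$. A non-autonomous system $(Y,g_{1,\infty})$ is topologically transitive if for all non-empty open $U,V$ there is $n\in\mathbb{N}$ with $g_1^n(U)\cap V\ne\emptyset$, and weakly mixing if for all non-empty open $U_1,U_2,V_1,V_2$ there is $n\in\mathbb{N}$ with $g_1^n(U_i)\cap V_i\ne\emptyset$ for $i=1,2$. *)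

theory Defs
  imports "HOL-Analysis.Analysis"
begin

text \<open>Non-autonomous composition: \<open>fcomp_seq f n = f n \<circ> \<dots> \<circ> f 1\<close>
  (the maps are indexed from 1; \<open>fcomp_seq f 0 = id\<close>).\<close>
primrec fcomp_seq :: "(nat \<Rightarrow> 'b \<Rightarrow> 'b) \<Rightarrow> nat \<Rightarrow> 'b \<Rightarrow> 'b" where
  "fcomp_seq f 0 = id"
| "fcomp_seq f (Suc n) = f (Suc n) \<circ> fcomp_seq f n"

definition na_transitive :: "'b topology \<Rightarrow> (nat \<Rightarrow> 'b \<Rightarrow> 'b) \<Rightarrow> bool" where
  "na_transitive T g \<longleftrightarrow>
     (\<forall>U V. openin T U \<and> U \<noteq> {} \<and> openin T V \<and> V \<noteq> {} \<longrightarrow>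
        (\<exists>n\<ge>1. fcomp_seq g n ` U \<inter> V \<noteq> {}))"

definition na_weakly_mixing :: "'b topology \<Rightarrow> (nat \<Rightarrow> 'b \<Rightarrow> 'b) \<Rightarrow> bool" where
  "na_weakly_mixing T g \<longleftrightarrow>
     (\<forall>U1 U2 V1 V2. openin T U1 \<and> U1 \<noteq> {} \<and> openin T U2 \<and> U2 \<noteq> {} \<and>
                    openin T V1 \<and> V1 \<noteq> {} \<and> openin T V2 \<and> V2 \<noteq> {} \<longrightarrow>
        (\<exists>n\<ge>1. fcomp_seq g n ` U1 \<inter> V1 \<noteq> {} \<and> fcomp_seq g n ` U2 \<inter> V2 \<noteq> {}))"

definition hyperspace :: "'a::topological_space set set" where
  "hyperspace = {K. compact K \<and> K \<noteq> {}}"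

text \<open>The Vietoris topology on the hyperspace, generated by the subbasic sets
  \<open>\<langle>U\<rangle> = {K. K \<subseteq> U}\<close> and \<open>[U] = {K. K \<inter> U \<noteq> {}}\<close>, U open.\<close>
definition vietoris :: "'a::topological_space set topology" where
  "vietoris = topology_generated_by
     ({{K \<in> hyperspace. K \<subseteq> U} | U. open U} \<union> {{K \<in> hyperspace. K \<inter> U \<noteq> {}} | U. open U})"

definition induced :: "(nat \<Rightarrow> 'a \<Rightarrow> 'a) \<Rightarrow> nat \<Rightarrow> 'a set \<Rightarrow> 'a set" where
  "induced f n K = f n ` K"

end

theory Submission
  imports Defs
begin

lemma fcomp_comm1:
  assumes comm: "\<And>i j x. i \<ge> 1 \<Longrightarrow> j \<ge> 1 \<Longrightarrow> f i (f j x) = f j (f i x)"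
    and i: "i \<ge> 1"
  shows "f i (fcomp_seq f n x) = fcomp_seq f n (f i x)"
proof (induction n)
  case 0 then show ?case by simp
next
  case (Suc n)
  have "f i (fcomp_seq f (Suc n) x) = f i (f (Suc n) (fcomp_seq f n x))" by simp
  also have "\<dots> = f (Suc n) (f i (fcomp_seq f n x))" using comm[OF i, of "Suc n"] by simp
  also have "\<dots> = f (Suc n) (fcomp_seq f n (f i x))" using Suc.IH by simp
  also have "\<dots> = fcomp_seq f (Suc n) (f i x)" by simp
  finally show ?case .
qed

lemma fcomp_comm2:
  assumes comm: "\<And>i j x. i \<ge> 1 \<Longrightarrow> j \<ge> 1 \<Longrightarrow> f i (f j x) = f j (f i x)"
  shows "fcomp_seq f m (fcomp_seq f n x) = fcomp_seq f n (fcomp_seq f m x)"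
proof (induction m arbitrary: x)
  case 0 then show ?case by simp
next
  case (Suc m)
  have "fcomp_seq f (Suc m) (fcomp_seq f n x) = f (Suc m) (fcomp_seq f m (fcomp_seq f n x))" by simp
  also have "\<dots> = f (Suc m) (fcomp_seq f n (fcomp_seq f m x))" by (simp only: Suc.IH)
  also have "\<dots> = fcomp_seq f n (f (Suc m) (fcomp_seq f m x))"
    by (rule fcomp_comm1[of f, OF comm]) simp_all
  also have "\<dots> = fcomp_seq f n (fcomp_seq f (Suc m) x)" by simp
  finally show ?case .
qed

lemma fcomp_cont:
  assumes "\<And>n. n \<ge> 1 \<Longrightarrow> continuous_on UNIV (f n)"
  shows "continuous_on UNIV (fcomp_seq f n)"
proof (induction n)
  case 0 then show ?case by (simp add: continuous_on_id)
next
  case (Suc n)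
  then show ?case using assms[of "Suc n"]
    by (auto intro: continuous_on_compose2)
qed

lemma fcomp_induced: "fcomp_seq (induced f) n K = fcomp_seq f n ` K"
  by (induction n arbitrary: K) (auto simp: induced_def image_comp)

lemma wm_multi:
  fixes f :: "nat \<Rightarrow> 'a::topological_space \<Rightarrow> 'a"
  assumes wm: "na_weakly_mixing euclidean f"
    and cont: "\<And>n. continuous_on UNIV (fcomp_seq f n)"
    and comm: "\<And>m n x. fcomp_seq f m (fcomp_seq f n x) = fcomp_seq f n (fcomp_seq f m x)"
    and fin: "finite P"
  shows "(\<forall>(A,B)\<in>P. open A \<and> A \<noteq> {} \<and> open B \<and> B \<noteq> {}) \<longrightarrow>
    (\<forall>A0 B0. open A0 \<and> A0 \<noteq> {} \<and> open B0 \<and> B0 \<noteq> {} \<longrightarrow>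
      (\<exists>n\<ge>1. fcomp_seq f n ` A0 \<inter> B0 \<noteq> {} \<and> (\<forall>(A,B)\<in>P. fcomp_seq f n ` A \<inter> B \<noteq> {})))"
  using fin
proof (induction P rule: finite_induct)
  case empty
  show ?case
  proof (intro allI impI)
    fix A0 B0 :: "'a set" assume h: "open A0 \<and> A0 \<noteq> {} \<and> open B0 \<and> B0 \<noteq> {}"
    then obtain n where "n\<ge>1" "fcomp_seq f n ` A0 \<inter> B0 \<noteq> {}"
      using wm[unfolded na_weakly_mixing_def, rule_format, of A0 A0 B0 B0] h by auto
    thus "\<exists>n\<ge>1. fcomp_seq f n ` A0 \<inter> B0 \<noteq> {} \<and> (\<forall>(A,B)\<in>{}. fcomp_seq f n ` A \<inter> B \<noteq> {})" by auto
  qed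
next
  case (insert p P)
  obtain A B where p: "p = (A,B)" by (cases p)
  show ?case
  proof (intro impI allI)
    assume hP: "\<forall>(A,B)\<in>insert p P. open A \<and> A \<noteq> {} \<and> open B \<and> B \<noteq> {}"
    have hAB: "open A" "A\<noteq>{}" "open B" "B\<noteq>{}" using hP p by auto
    have IH: "\<forall>A0 B0. open A0 \<and> A0 \<noteq> {} \<and> open B0 \<and> B0 \<noteq> {} \<longrightarrow>
      (\<exists>n\<ge>1. fcomp_seq f n ` A0 \<inter> B0 \<noteq> {} \<and> (\<forall>(A,B)\<in>P. fcomp_seq f n ` A \<inter> B \<noteq> {}))"
      using insert.IH hP by auto
    fix A0 B0 :: "'a set" assume h: "open A0 \<and> A0 \<noteq> {} \<and> open B0 \<and> B0 \<noteq> {}"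
    obtain m where m: "m\<ge>1" "fcomp_seq f m ` A0 \<inter> A \<noteq> {}" "fcomp_seq f m ` B0 \<inter> B \<noteq> {}"
      using wm[unfolded na_weakly_mixing_def, rule_format, of A0 B0 A B] h hAB by auto
    define A0' where "A0' = A0 \<inter> fcomp_seq f m -` A"
    define B0' where "B0' = B0 \<inter> fcomp_seq f m -` B"
    have "open (fcomp_seq f m -` A)" by (rule open_vimage[OF hAB(1) cont])
    moreover have "open (fcomp_seq f m -` B)" by (rule open_vimage[OF hAB(3) cont])
    ultimately have "open A0'" "open B0'" unfolding A0'_def B0'_def
      using h by (simp_all add: open_Int)
    moreover have "A0' \<noteq> {}" "B0' \<noteq> {}" using m unfolding A0'_def B0'_def by auto
    ultimately obtain n where n: "n\<ge>1" "fcomp_seq f n ` A0' \<inter> B0' \<noteq> {}"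
       "\<forall>(A,B)\<in>P. fcomp_seq f n ` A \<inter> B \<noteq> {}"
      using IH[rule_format, of A0' B0'] by blast
    then obtain x where x: "x\<in>A0" "fcomp_seq f m x\<in>A" "fcomp_seq f n x\<in>B0" "fcomp_seq f m (fcomp_seq f n x) \<in> B"
      unfolding A0'_def B0'_def by auto
    have "fcomp_seq f n (fcomp_seq f m x) \<in> B" using x(4) by (simp only: comm[of m n x])
    then have "fcomp_seq f n ` A \<inter> B \<noteq> {}" using x(2) by blast
    moreover have "fcomp_seq f n ` A0 \<inter> B0 \<noteq> {}" using x(1,3) by blast
    ultimately show "\<exists>n\<ge>1. fcomp_seq f n ` A0 \<inter> B0 \<noteq> {} \<and> (\<forall>(A,B)\<in>insert p P. fcomp_seq f n ` A \<inter> B \<noteq> {})"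
      using n p by auto
  qed
qed


lemma fcomp_induced': "fcomp_seq (induced f) n = (\<lambda>K. fcomp_seq f n ` K)"
  by (rule ext) (rule fcomp_induced)

definition vbasic :: "'a::topological_space set set \<Rightarrow> 'a set set" where
  "vbasic W = {K \<in> hyperspace. K \<subseteq> \<Union>W \<and> (\<forall>U\<in>W. K \<inter> U \<noteq> {})}"

lemma vietoris_nbhd:
  assumes "generate_topology_on ({{K \<in> hyperspace. K \<subseteq> U} | U. open U} \<union>
            {{K \<in> hyperspace. K \<inter> U \<noteq> {}} | U. open U}) Ob" and "K \<in> Ob"
  shows "\<exists>W. finite W \<and> (\<forall>U\<in>W. open U) \<and> K \<in> vbasic W \<and> vbasic W \<subseteq> Ob"
  using assms
proof (induction arbitrary: K rule: generate_topology_on.induct)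
  case Empty thus ?case by simp
next
  case (Int a b)
  have Ka: "K \<in> a" "K \<in> b" using Int.prems by simp_all
  obtain W1 where W1: "finite W1" "\<forall>U\<in>W1. open U" "K \<in> vbasic W1" "vbasic W1 \<subseteq> a"
    using Int.IH(1)[OF Ka(1)] by blast
  obtain W2 where W2: "finite W2" "\<forall>U\<in>W2. open U" "K \<in> vbasic W2" "vbasic W2 \<subseteq> b"
    using Int.IH(2)[OF Ka(2)] by blast
  define Q where "Q = {p \<in> W1 \<times> W2. K \<inter> (fst p \<inter> snd p) \<noteq> {}}"
  define W where "W = (\<lambda>p. fst p \<inter> snd p) ` Q"
  have fQ: "finite Q" unfolding Q_def using W1(1) W2(1) by simp
  have fW: "finite W" unfolding W_def using fQ by simp
  have memW: "U1 \<inter> U2 \<in> W" if "U1 \<in> W1" "U2 \<in> W2" "K \<inter> (U1 \<inter> U2) \<noteq> {}" for U1 U2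
  proof -
    have "(U1,U2) \<in> Q" unfolding Q_def using that by simp
    thus ?thesis unfolding W_def by (rule image_eqI[rotated]) simp
  qed
  have Wmem: "\<exists>U1 U2. U = U1 \<inter> U2 \<and> U1 \<in> W1 \<and> U2 \<in> W2" if "U \<in> W" for U
    using that unfolding W_def Q_def by auto
  have oW: "\<forall>U\<in>W. open U"
  proof
    fix U assume "U \<in> W"
    then obtain U1 U2 where "U = U1 \<inter> U2" "U1 \<in> W1" "U2 \<in> W2" using Wmem by blast
    thus "open U" using W1(2) W2(2) by (simp add: open_Int)
  qed
  have KW: "K \<in> vbasic W"
  proof -
    have "K \<subseteq> \<Union>W"
    proof
      fix y assume y: "y \<in> K"
      obtain U1 where U1: "U1 \<in> W1" "y \<in> U1" using W1(3) y unfolding vbasic_def by auto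
      obtain U2 where U2: "U2 \<in> W2" "y \<in> U2" using W2(3) y unfolding vbasic_def by auto
      have "K \<inter> (U1 \<inter> U2) \<noteq> {}" using y U1 U2 by blast
      hence "U1 \<inter> U2 \<in> W" using memW U1(1) U2(1) by blast
      thus "y \<in> \<Union>W" using U1(2) U2(2) by blast
    qed
    moreover have "\<forall>U\<in>W. K \<inter> U \<noteq> {}" unfolding W_def Q_def by auto
    moreover have "K \<in> hyperspace" using W1(3) unfolding vbasic_def by simp
    ultimately show ?thesis unfolding vbasic_def by simp
  qed
  have "vbasic W \<subseteq> vbasic W1 \<inter> vbasic W2"
  proof
    fix L assume L: "L \<in> vbasic W"
    have L1: "L \<in> hyperspace" "L \<subseteq> \<Union>W" "\<forall>U\<in>W. L \<inter> U \<noteq> {}" using L unfolding vbasic_def by auto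
    have "\<Union>W \<subseteq> \<Union>W1" "\<Union>W \<subseteq> \<Union>W2"
    proof -
      show "\<Union>W \<subseteq> \<Union>W1"
      proof
        fix y assume "y \<in> \<Union>W"
        then obtain U where "U \<in> W" "y \<in> U" by blast
        then obtain U1 U2 where "U = U1 \<inter> U2" "U1 \<in> W1" "U2 \<in> W2" using Wmem by blast
        thus "y \<in> \<Union>W1" using \<open>y \<in> U\<close> by blast
      qed
      show "\<Union>W \<subseteq> \<Union>W2"
      proof
        fix y assume "y \<in> \<Union>W"
        then obtain U where "U \<in> W" "y \<in> U" by blast
        then obtain U1 U2 where "U = U1 \<inter> U2" "U1 \<in> W1" "U2 \<in> W2" using Wmem by blast
        thus "y \<in> \<Union>W2" using \<open>y \<in> U\<close> by blast
      qed
    qed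
    hence s: "L \<subseteq> \<Union>W1" "L \<subseteq> \<Union>W2" using L1(2) by (meson order_trans)+
    have t1: "\<forall>U\<in>W1. L \<inter> U \<noteq> {}"
    proof
      fix U1 assume U1: "U1 \<in> W1"
      then obtain y where y: "y \<in> K" "y \<in> U1" using W1(3) unfolding vbasic_def by blast
      then obtain U2 where U2: "U2 \<in> W2" "y \<in> U2" using W2(3) unfolding vbasic_def by blast
      have "K \<inter> (U1 \<inter> U2) \<noteq> {}" using y U2 by blast
      hence "U1 \<inter> U2 \<in> W" using memW U1 U2(1) by blast
      hence "L \<inter> (U1 \<inter> U2) \<noteq> {}" using L1(3) by blast
      thus "L \<inter> U1 \<noteq> {}" by blast
    qed
    have t2: "\<forall>U\<in>W2. L \<inter> U \<noteq> {}"
    proof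
      fix U2 assume U2: "U2 \<in> W2"
      then obtain y where y: "y \<in> K" "y \<in> U2" using W2(3) unfolding vbasic_def by blast
      then obtain U1 where U1: "U1 \<in> W1" "y \<in> U1" using W1(3) unfolding vbasic_def by blast
      have "K \<inter> (U1 \<inter> U2) \<noteq> {}" using y U1 by blast
      hence "U1 \<inter> U2 \<in> W" using memW U1(1) U2 by blast
      hence "L \<inter> (U1 \<inter> U2) \<noteq> {}" using L1(3) by blast
      thus "L \<inter> U2 \<noteq> {}" by blast
    qed
    show "L \<in> vbasic W1 \<inter> vbasic W2" using L1(1) s t1 t2 unfolding vbasic_def by simp
  qed
  hence "vbasic W \<subseteq> a \<inter> b" using W1(4) W2(4) by blast
  thus ?case using fW oW KW by blast
next
  case (UN KK)
  obtain k where k: "k \<in> KK" "K \<in> k" using UN.prems by (rule UnionE)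
  obtain W where W: "finite W" "\<forall>U\<in>W. open U" "K \<in> vbasic W" "vbasic W \<subseteq> k"
    using UN.IH[OF k] by blast
  have "vbasic W \<subseteq> \<Union>KK" using W(4) \<open>k \<in> KK\<close> by blast
  then show ?case using W(1-3) by blast
next
  case (Basis s)
  from Basis.hyps show ?case
  proof (elim UnE CollectE exE conjE)
    fix U assume 1: "s = {K \<in> hyperspace. K \<subseteq> U}" "open U"
    have "K \<in> vbasic {U}" using Basis.prems unfolding 1(1) vbasic_def hyperspace_def by auto
    moreover have "vbasic {U} \<subseteq> s" unfolding 1(1) vbasic_def by auto
    ultimately show ?thesis using 1(2) by (intro exI[of _ "{U}"]) simp
  next
    fix U assume 2: "s = {K \<in> hyperspace. K \<inter> U \<noteq> {}}" "open U"
    have "K \<in> vbasic {UNIV, U}" using Basis.prems unfolding 2(1) vbasic_def hyperspace_def by auto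
    moreover have "vbasic {UNIV, U} \<subseteq> s" unfolding 2(1) vbasic_def by auto
    ultimately show ?thesis using 2(2) by (intro exI[of _ "{UNIV, U}"]) simp
  qed
qed

lemma vietoris_nbhd':
  assumes "openin vietoris Ob" "Ob \<noteq> {}"
  shows "\<exists>W. finite W \<and> (\<forall>U\<in>W. open U \<and> U \<noteq> {}) \<and> W \<noteq> {} \<and> vbasic W \<subseteq> Ob"
proof -
  obtain K where K: "K \<in> Ob" using assms(2) by blast
  obtain W where W: "finite W" "\<forall>U\<in>W. open U" "K \<in> vbasic W" "vbasic W \<subseteq> Ob"
    using vietoris_nbhd[OF _ K] assms(1) unfolding vietoris_def openin_topology_generated_by_iff
    by blast
  have "K \<noteq> {}" using W(3) unfolding vbasic_def hyperspace_def by auto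
  hence "W \<noteq> {}" using W(3) unfolding vbasic_def by auto
  moreover have "\<forall>U\<in>W. U \<noteq> {}" using W(3) unfolding vbasic_def by auto
  ultimately show ?thesis using W by blast
qed

lemma pick_set:
  fixes x :: "'a set \<times> 'a set \<Rightarrow> 'a::topological_space"
  assumes "finite A" "finite B" "A \<noteq> {}" "B \<noteq> {}"
    and xp: "\<And>U V. U \<in> A \<Longrightarrow> V \<in> B \<Longrightarrow> x (U,V) \<in> U \<and> g (x (U,V)) \<in> V"
  shows "x ` (A \<times> B) \<in> vbasic A \<and> g ` x ` (A \<times> B) \<in> vbasic B"
proof -
  have fin: "finite (A \<times> B)" using assms by simp
  have ne: "A \<times> B \<noteq> {}" using assms by simp
  have h1: "x ` (A \<times> B) \<in> hyperspace" unfolding hyperspace_def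
    using fin ne by (auto intro: finite_imp_compact)
  have h2: "g ` x ` (A \<times> B) \<in> hyperspace" unfolding hyperspace_def
    using fin ne by (auto intro!: finite_imp_compact)
  have "x ` (A \<times> B) \<subseteq> \<Union>A" using xp by auto
  moreover have "\<forall>U\<in>A. x ` (A \<times> B) \<inter> U \<noteq> {}"
  proof
    fix U assume U: "U \<in> A"
    obtain V where V: "V \<in> B" using assms(4) by blast
    have "x (U,V) \<in> x ` (A \<times> B) \<inter> U" using xp[OF U V] U V by auto
    thus "x ` (A \<times> B) \<inter> U \<noteq> {}" by blast
  qed
  moreover have "g ` x ` (A \<times> B) \<subseteq> \<Union>B" using xp by auto
  moreover have "\<forall>V\<in>B. g ` x ` (A \<times> B) \<inter> V \<noteq> {}"
  proof
    fix V assume V: "V \<in> B"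
    obtain U where U: "U \<in> A" using assms(3) by blast
    have "g (x (U,V)) \<in> g ` x ` (A \<times> B) \<inter> V" using xp[OF U V] U V by auto
    thus "g ` x ` (A \<times> B) \<inter> V \<noteq> {}" by blast
  qed
  ultimately show ?thesis using h1 h2 unfolding vbasic_def by auto
qed

lemma wm_hyper:
  fixes f :: "nat \<Rightarrow> 'a::topological_space \<Rightarrow> 'a"
  assumes wm: "na_weakly_mixing euclidean f"
    and cont: "\<And>n. continuous_on UNIV (fcomp_seq f n)"
    and comm: "\<And>m n x. fcomp_seq f m (fcomp_seq f n x) = fcomp_seq f n (fcomp_seq f m x)"
  shows "na_weakly_mixing vietoris (induced f)"
  unfolding na_weakly_mixing_def fcomp_induced'
proof (intro allI impI)
  fix U1 U2 V1 V2 :: "'a set set"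
  assume h: "openin vietoris U1 \<and> U1 \<noteq> {} \<and> openin vietoris U2 \<and> U2 \<noteq> {} \<and>
             openin vietoris V1 \<and> V1 \<noteq> {} \<and> openin vietoris V2 \<and> V2 \<noteq> {}"
  obtain A1 where A1: "finite A1" "\<forall>U\<in>A1. open U \<and> U \<noteq> {}" "A1 \<noteq> {}" "vbasic A1 \<subseteq> U1"
    using vietoris_nbhd'[of U1] h by blast
  obtain A2 where A2: "finite A2" "\<forall>U\<in>A2. open U \<and> U \<noteq> {}" "A2 \<noteq> {}" "vbasic A2 \<subseteq> U2"
    using vietoris_nbhd'[of U2] h by blast
  obtain B1 where B1: "finite B1" "\<forall>U\<in>B1. open U \<and> U \<noteq> {}" "B1 \<noteq> {}" "vbasic B1 \<subseteq> V1"
    using vietoris_nbhd'[of V1] h by blast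
  obtain B2 where B2: "finite B2" "\<forall>U\<in>B2. open U \<and> U \<noteq> {}" "B2 \<noteq> {}" "vbasic B2 \<subseteq> V2"
    using vietoris_nbhd'[of V2] h by blast
  define P where "P = A1 \<times> B1 \<union> A2 \<times> B2"
  have fP: "finite P" unfolding P_def using A1 A2 B1 B2 by simp
  have oP: "\<forall>(A,B)\<in>P. open A \<and> A \<noteq> {} \<and> open B \<and> B \<noteq> {}"
    unfolding P_def using A1(2) A2(2) B1(2) B2(2) by auto
  obtain n where n: "n \<ge> 1" "\<forall>(A,B)\<in>P. fcomp_seq f n ` A \<inter> B \<noteq> {}"
    using mp[OF wm_multi[OF wm cont comm fP] oP, rule_format, of UNIV UNIV] by auto
  define x where "x = (\<lambda>(A,B). SOME y. y \<in> A \<and> fcomp_seq f n y \<in> (B::'a set))"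
  have xP: "x (A,B) \<in> A \<and> fcomp_seq f n (x (A,B)) \<in> B" if "(A,B) \<in> P" for A B
  proof -
    have "\<exists>y. y \<in> A \<and> fcomp_seq f n y \<in> B" using n(2) that by blast
    from someI_ex[OF this] show ?thesis unfolding x_def by simp
  qed
  have M1: "x ` (A1 \<times> B1) \<in> vbasic A1 \<and> fcomp_seq f n ` x ` (A1 \<times> B1) \<in> vbasic B1"
    by (rule pick_set) (use A1 B1 xP in \<open>auto simp: P_def\<close>)
  have M2: "x ` (A2 \<times> B2) \<in> vbasic A2 \<and> fcomp_seq f n ` x ` (A2 \<times> B2) \<in> vbasic B2"
    by (rule pick_set) (use A2 B2 xP in \<open>auto simp: P_def\<close>)
  have m1: "x ` (A1 \<times> B1) \<in> U1" by (rule subsetD[OF A1(4) conjunct1[OF M1]])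
  have v1: "fcomp_seq f n ` x ` (A1 \<times> B1) \<in> V1" by (rule subsetD[OF B1(4) conjunct2[OF M1]])
  have i1: "fcomp_seq f n ` x ` (A1 \<times> B1) \<in> (\<lambda>K. fcomp_seq f n ` K) ` U1" by (rule imageI[OF m1])
  have ne1: "(\<lambda>K. fcomp_seq f n ` K) ` U1 \<inter> V1 \<noteq> {}"
    using IntI[OF i1 v1] by (metis equals0D)
  have m2: "x ` (A2 \<times> B2) \<in> U2" by (rule subsetD[OF A2(4) conjunct1[OF M2]])
  have v2: "fcomp_seq f n ` x ` (A2 \<times> B2) \<in> V2" by (rule subsetD[OF B2(4) conjunct2[OF M2]])
  have i2: "fcomp_seq f n ` x ` (A2 \<times> B2) \<in> (\<lambda>K. fcomp_seq f n ` K) ` U2" by (rule imageI[OF m2])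
  have ne2: "(\<lambda>K. fcomp_seq f n ` K) ` U2 \<inter> V2 \<noteq> {}"
    using IntI[OF i2 v2] by (metis equals0D)
  show "\<exists>n\<ge>1. (\<lambda>K. fcomp_seq f n ` K) ` U1 \<inter> V1 \<noteq> {} \<and>
                         (\<lambda>K. fcomp_seq f n ` K) ` U2 \<inter> V2 \<noteq> {}"
    using n(1) ne1 ne2 by (intro exI[of _ n] conjI)
qed


lemma img_meet: "x \<in> A \<Longrightarrow> g x \<in> B \<Longrightarrow> g ` A \<inter> B \<noteq> {}"
  by blast

lemma img_meetD: "g ` A \<inter> B \<noteq> {} \<Longrightarrow> \<exists>x\<in>A. g x \<in> B"
  by blast

lemma trans_P:
  fixes f :: "nat \<Rightarrow> 'a::t1_space \<Rightarrow> 'a"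
  assumes tr: "na_transitive vietoris (induced f)"
    and oU: "open U" "U \<noteq> {}" and oV1: "open V1" "V1 \<noteq> {}" and oV2: "open V2" "V2 \<noteq> {}"
  shows "\<exists>n\<ge>1. fcomp_seq f n ` U \<inter> V1 \<noteq> {} \<and> fcomp_seq f n ` U \<inter> V2 \<noteq> {}"
proof -
  define AA where "AA = {K \<in> hyperspace. K \<subseteq> U}"
  define B1 where "B1 = {K \<in> hyperspace. K \<inter> V1 \<noteq> {}}"
  define B2 where "B2 = {K \<in> hyperspace. K \<inter> V2 \<noteq> {}}"
  let ?S = "{{K \<in> hyperspace. K \<subseteq> U} | U. open U} \<union> {{K \<in> hyperspace. K \<inter> U \<noteq> {}} | U. open U} :: 'a set set set"
  have "AA \<in> ?S" unfolding AA_def using oU(1) by blast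
  hence oA: "openin vietoris AA" unfolding vietoris_def openin_topology_generated_by_iff
    by (rule generate_topology_on.Basis)
  have "B1 \<in> ?S" unfolding B1_def using oV1(1) by blast
  hence g1: "generate_topology_on ?S B1" by (rule generate_topology_on.Basis)
  have "B2 \<in> ?S" unfolding B2_def using oV2(1) by blast
  hence g2: "generate_topology_on ?S B2" by (rule generate_topology_on.Basis)
  have oB: "openin vietoris (B1 \<inter> B2)" unfolding vietoris_def openin_topology_generated_by_iff
    by (rule generate_topology_on.Int[OF g1 g2])
  obtain a where a: "a \<in> U" using oU(2) by blast
  obtain b1 where b1: "b1 \<in> V1" using oV1(2) by blast
  obtain b2 where b2: "b2 \<in> V2" using oV2(2) by blast
  have "{a} \<in> AA" unfolding AA_def hyperspace_def using a by simp
  hence neA: "AA \<noteq> {}" by blast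
  have "compact {b1, b2}" by (rule finite_imp_compact) simp
  hence "{b1,b2} \<in> B1 \<inter> B2" unfolding B1_def B2_def hyperspace_def using b1 b2 by auto
  hence neB: "B1 \<inter> B2 \<noteq> {}" by blast
  obtain n where n: "n \<ge> 1" "fcomp_seq (induced f) n ` AA \<inter> (B1 \<inter> B2) \<noteq> {}"
    using tr[unfolded na_transitive_def, rule_format, of AA "B1 \<inter> B2"] oA oB neA neB by blast
  then obtain K where K: "K \<in> AA" "fcomp_seq f n ` K \<in> B1 \<inter> B2"
    unfolding fcomp_induced' by blast
  have "fcomp_seq f n ` K \<inter> V1 \<noteq> {}" "fcomp_seq f n ` K \<inter> V2 \<noteq> {}"
    using K(2) unfolding B1_def B2_def by auto
  moreover have "K \<subseteq> U" using K(1) unfolding AA_def by simp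
  ultimately have "fcomp_seq f n ` U \<inter> V1 \<noteq> {}" "fcomp_seq f n ` U \<inter> V2 \<noteq> {}"
    using img_meetD img_meet by (metis subsetD)+
  thus ?thesis using n(1) by (intro exI[of _ n] conjI)
qed

lemma trans_wm:
  fixes f :: "nat \<Rightarrow> 'a::t1_space \<Rightarrow> 'a"
  assumes tr: "na_transitive vietoris (induced f)"
    and cont: "\<And>n. continuous_on UNIV (fcomp_seq f n)"
    and comm: "\<And>m n x. fcomp_seq f m (fcomp_seq f n x) = fcomp_seq f n (fcomp_seq f m x)"
  shows "na_weakly_mixing euclidean f"
  unfolding na_weakly_mixing_def
proof (intro allI impI)
  fix U1 U2 V1 V2 :: "'a set"
  assume h: "openin euclidean U1 \<and> U1 \<noteq> {} \<and> openin euclidean U2 \<and> U2 \<noteq> {} \<and>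
             openin euclidean V1 \<and> V1 \<noteq> {} \<and> openin euclidean V2 \<and> V2 \<noteq> {}"
  have o: "open U1" "U1 \<noteq> {}" "open U2" "U2 \<noteq> {}" "open V1" "V1 \<noteq> {}" "open V2" "V2 \<noteq> {}"
    using h by (simp_all add: open_openin[symmetric])
  obtain m where m: "m \<ge> 1" "fcomp_seq f m ` U2 \<inter> U1 \<noteq> {}" "fcomp_seq f m ` U2 \<inter> V1 \<noteq> {}"
    using trans_P[OF tr o(3,4) o(1,2) o(5,6)] by blast
  define U where "U = U2 \<inter> fcomp_seq f m -` U1"
  define W where "W = fcomp_seq f m -` V1"
  have "open (fcomp_seq f m -` U1)" by (rule open_vimage[OF o(1) cont])
  hence oU: "open U" unfolding U_def using o(3) by (simp add: open_Int)
  have oW: "open W" unfolding W_def by (rule open_vimage[OF o(5) cont])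
  obtain u where u: "u \<in> U2" "fcomp_seq f m u \<in> U1" using img_meetD[OF m(2)] by blast
  have neU: "U \<noteq> {}" using u unfolding U_def by blast
  obtain w where w: "w \<in> U2" "fcomp_seq f m w \<in> V1" using img_meetD[OF m(3)] by blast
  have neW: "W \<noteq> {}" using w unfolding W_def by blast
  obtain n where n: "n \<ge> 1" "fcomp_seq f n ` U \<inter> V2 \<noteq> {}" "fcomp_seq f n ` U \<inter> W \<noteq> {}"
    using trans_P[OF tr oU neU o(7,8) oW neW] by blast
  obtain y where y: "y \<in> U" "fcomp_seq f n y \<in> V2" using img_meetD[OF n(2)] by blast
  obtain z where z: "z \<in> U" "fcomp_seq f n z \<in> W" using img_meetD[OF n(3)] by blast
  have "y \<in> U2" using y(1) unfolding U_def by simp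
  hence ne2: "fcomp_seq f n ` U2 \<inter> V2 \<noteq> {}" using y(2) by (rule img_meet)
  have zU1: "fcomp_seq f m z \<in> U1" using z(1) unfolding U_def by simp
  have "fcomp_seq f m (fcomp_seq f n z) \<in> V1" using z(2) unfolding W_def by simp
  hence "fcomp_seq f n (fcomp_seq f m z) \<in> V1" by (simp only: comm[of m n z])
  hence ne1: "fcomp_seq f n ` U1 \<inter> V1 \<noteq> {}" by (rule img_meet[OF zU1])
  show "\<exists>n\<ge>1. fcomp_seq f n ` U1 \<inter> V1 \<noteq> {} \<and> fcomp_seq f n ` U2 \<inter> V2 \<noteq> {}"
    using n(1) ne1 ne2 by (intro exI[of _ n] conjI)
qed

theorem theorem3p2:
  fixes f :: "nat \<Rightarrow> 'a::metric_space \<Rightarrow> 'a"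
  assumes "compact (UNIV :: 'a set)"
    and "\<And>n. n \<ge> 1 \<Longrightarrow> continuous_on UNIV (f n)"
    and "\<And>i j. i \<ge> 1 \<Longrightarrow> j \<ge> 1 \<Longrightarrow> f i \<circ> f j = f j \<circ> f i"
  shows "(na_weakly_mixing euclidean f \<longleftrightarrow> na_weakly_mixing vietoris (induced f))
       \<and> (na_weakly_mixing vietoris (induced f) \<longleftrightarrow> na_transitive vietoris (induced f))"
proof -
  have comm': "\<And>i j x. i \<ge> 1 \<Longrightarrow> j \<ge> 1 \<Longrightarrow> f i (f j x) = f j (f i x)"
    using assms(3) by (metis comp_apply)
  have C: "\<And>m n x. fcomp_seq f m (fcomp_seq f n x) = fcomp_seq f n (fcomp_seq f m x)"
    by (rule fcomp_comm2[of f, OF comm'])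
  have cont: "\<And>n. continuous_on UNIV (fcomp_seq f n)"
    by (rule fcomp_cont) (rule assms(2))
  have i12: "na_weakly_mixing euclidean f \<Longrightarrow> na_weakly_mixing vietoris (induced f)"
    by (rule wm_hyper[OF _ cont C])
  have i23: "na_weakly_mixing vietoris (induced f) \<Longrightarrow> na_transitive vietoris (induced f)"
  proof -
    assume wmv: "na_weakly_mixing vietoris (induced f)"
    show "na_transitive vietoris (induced f)" unfolding na_transitive_def
    proof (intro allI impI)
      fix U V :: "'a set set"
      assume hUV: "openin vietoris U \<and> U \<noteq> {} \<and> openin vietoris V \<and> V \<noteq> {}"
      have "\<exists>n\<ge>1. fcomp_seq (induced f) n ` U \<inter> V \<noteq> {} \<and> fcomp_seq (induced f) n ` U \<inter> V \<noteq> {}"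
        using wmv[unfolded na_weakly_mixing_def, rule_format, of U U V V] hUV by simp
      thus "\<exists>n\<ge>1. fcomp_seq (induced f) n ` U \<inter> V \<noteq> {}" by simp
    qed
  qed
  have i31: "na_transitive vietoris (induced f) \<Longrightarrow> na_weakly_mixing euclidean f"
    by (rule trans_wm[OF _ cont C])
  show ?thesis using i12 i23 i31 by blast
qed

end
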